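(* Let $\Omega\subset\mathbb{R}^d$ be a hypercube of side length $L$, with probability densities $\varphi_P,\varphi_D$ on $\Omega$. For an integer $r\ge1$, let $\mathcal{C}_r=\{C^1,\ldots,C^{r^d}\}$ be the partition of $\Omega$ into the grid of $r^d$ cubes of side $L/r$, and let $\overline{A}=[\overline{\alpha}_{ij}]$ be an optimal solution of the linear program: minimize $\sum_{i,j}\alpha_{ij}\max_{y\in C^i,x\in C^j}\|x-y\|$ over $\alpha_{ij}\ge0$ subject to $\sum_j\alpha_{ij}=\varphi_D(C^i)$ for all $i$ and $\sum_i\alpha_{ij}=\varphi_P(C^j)$ for all $j$. Let $Y$ have density $\varphi_D$ and let $X'$ be its shadow site: with $C^i$ the cell containing $Y$, sample $J=j'$ with probability $\overline{\alpha}_{ij'}/\varphi_D(C^i)$, then sample $X'$ from $\varphi_P$ conditioned on $X'\in C^J$. Then $$\mathbb{E}\|X'-Y\|-W(\varphi_D,\varphi_P)\le\frac{2L\sqrt{d}}{r}.$$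
   Context: For a cell $C$, $\varphi_P(C)=\int_C\varphi_P$, $\varphi_D(C)=\int_C\varphi_D$. The Euclidean Wasserstein distance is $W(\varphi_1,\varphi_2)=\inf_{\gamma\in\Gamma(\varphi_1,\varphi_2)}\int_{\Omega\times\Omega}\|y-x\|\,d\gamma(x,y)$, with $\Gamma(\varphi_1,\varphi_2)$ the set of measures on $\Omega\times\Omega$ with marginal densities $\varphi_1,\varphi_2$. *)

theory Defs
  imports "HOL-Analysis.Analysis" "HOL-Probability.Probability"
begin

type_synonym 'n cidx = "'n \<Rightarrow> nat"

definition hcube :: "real^'n \<Rightarrow> real \<Rightarrow> (real^'n) set" where
  "hcube a L = cbox a (\<chi> i. a$i + L)"

definition cell_indices :: "nat \<Rightarrow> ('n::finite) cidx set" where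
  "cell_indices r = {k. \<forall>i. k i < r}"

text \<open>Grid index of a point of Omega (points on the upper faces go to the last cell).\<close>
definition grid_index :: "real^'n \<Rightarrow> real \<Rightarrow> nat \<Rightarrow> real^'n \<Rightarrow> 'n cidx" where
  "grid_index a L r x = (\<lambda>i. min (r - 1) (nat \<lfloor>(x$i - a$i) * real r / L\<rfloor>))"

text \<open>The cells C^k of the partition of Omega (a genuine partition).\<close>
definition cell :: "real^'n \<Rightarrow> real \<Rightarrow> nat \<Rightarrow> 'n cidx \<Rightarrow> (real^'n) set" where
  "cell a L r k = {x \<in> hcube a L. grid_index a L r x = k}"

definition ccell :: "real^'n \<Rightarrow> real \<Rightarrow> nat \<Rightarrow> 'n cidx \<Rightarrow> (real^'n) set" where
  "ccell a L r k = cbox (\<chi> i. a$i + real (k i) * L / real r) (\<chi> i. a$i + real (k i + 1) * L / real r)"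

definition cell_cost :: "real^'n \<Rightarrow> real \<Rightarrow> nat \<Rightarrow> 'n cidx \<Rightarrow> 'n cidx \<Rightarrow> real" where
  "cell_cost a L r i j = Sup {norm (x - y) | x y. y \<in> ccell a L r i \<and> x \<in> ccell a L r j}"

definition cmass :: "(real^'n \<Rightarrow> real) \<Rightarrow> (real^'n) set \<Rightarrow> real" where
  "cmass \<phi> C = (LINT x:C|lborel. \<phi> x)"

definition lp_feasible ::
  "real^'n \<Rightarrow> real \<Rightarrow> nat \<Rightarrow> (real^'n \<Rightarrow> real) \<Rightarrow> (real^'n \<Rightarrow> real)
     \<Rightarrow> ('n::finite cidx \<Rightarrow> 'n cidx \<Rightarrow> real) \<Rightarrow> bool" where
  "lp_feasible a L r \<phi>P \<phi>D \<alpha> \<longleftrightarrow>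
     (\<forall>i\<in>cell_indices r. \<forall>j\<in>cell_indices r. \<alpha> i j \<ge> 0) \<and>
     (\<forall>i\<in>cell_indices r. (\<Sum>j\<in>cell_indices r. \<alpha> i j) = cmass \<phi>D (cell a L r i)) \<and>
     (\<forall>j\<in>cell_indices r. (\<Sum>i\<in>cell_indices r. \<alpha> i j) = cmass \<phi>P (cell a L r j))"

definition lp_cost :: "real^'n \<Rightarrow> real \<Rightarrow> nat \<Rightarrow> ('n::finite cidx \<Rightarrow> 'n cidx \<Rightarrow> real) \<Rightarrow> real" where
  "lp_cost a L r \<alpha> = (\<Sum>i\<in>cell_indices r. \<Sum>j\<in>cell_indices r. \<alpha> i j * cell_cost a L r i j)"

definition lp_optimal ::
  "real^'n \<Rightarrow> real \<Rightarrow> nat \<Rightarrow> (real^'n \<Rightarrow> real) \<Rightarrow> (real^'n \<Rightarrow> real)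
     \<Rightarrow> ('n::finite cidx \<Rightarrow> 'n cidx \<Rightarrow> real) \<Rightarrow> bool" where
  "lp_optimal a L r \<phi>P \<phi>D \<alpha> \<longleftrightarrow> lp_feasible a L r \<phi>P \<phi>D \<alpha> \<and>
     (\<forall>\<beta>. lp_feasible a L r \<phi>P \<phi>D \<beta> \<longrightarrow> lp_cost a L r \<alpha> \<le> lp_cost a L r \<beta>)"

text \<open>Joint law of (Y, X'): Y has density phi_D; given Y in C^i, J = j with probability
  alpha_ij / phi_D(C^i); given J = j, X' has density phi_P restricted to C^j and normalised.\<close>
definition shadow_law ::
  "real^'n \<Rightarrow> real \<Rightarrow> nat \<Rightarrow> (real^'n \<Rightarrow> real) \<Rightarrow> (real^'n \<Rightarrow> real)
     \<Rightarrow> ('n::finite cidx \<Rightarrow> 'n cidx \<Rightarrow> real) \<Rightarrow> ((real^'n) \<times> (real^'n)) measure" where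
  "shadow_law a L r \<phi>P \<phi>D \<alpha> = density (lborel \<Otimes>\<^sub>M lborel)
     (\<lambda>(y, x). ennreal (\<Sum>i\<in>cell_indices r. \<Sum>j\<in>cell_indices r.
         indicator (cell a L r i) y * \<phi>D y
         * (\<alpha> i j / cmass \<phi>D (cell a L r i))
         * (indicator (cell a L r j) x * \<phi>P x / cmass \<phi>P (cell a L r j))))"

definition shadow_expected_dist ::
  "real^'n \<Rightarrow> real \<Rightarrow> nat \<Rightarrow> (real^'n \<Rightarrow> real) \<Rightarrow> (real^'n \<Rightarrow> real)
     \<Rightarrow> ('n::finite cidx \<Rightarrow> 'n cidx \<Rightarrow> real) \<Rightarrow> ennreal" where
  "shadow_expected_dist a L r \<phi>P \<phi>D \<alpha> =
     (\<integral>\<^sup>+ z. ennreal (norm (snd z - fst z)) \<partial>shadow_law a L r \<phi>P \<phi>D \<alpha>)"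

definition couplings :: "(real^'n) set \<Rightarrow> (real^'n \<Rightarrow> real) \<Rightarrow> (real^'n \<Rightarrow> real)
     \<Rightarrow> ((real^'n::finite) \<times> (real^'n)) measure set" where
  "couplings \<Omega> \<phi>1 \<phi>2 = {\<gamma>. sets \<gamma> = sets (lborel \<Otimes>\<^sub>M lborel) \<and>
      emeasure \<gamma> (space \<gamma> - \<Omega> \<times> \<Omega>) = 0 \<and>
      distr \<gamma> lborel fst = density lborel (\<lambda>x. ennreal (indicator \<Omega> x * \<phi>1 x)) \<and>
      distr \<gamma> lborel snd = density lborel (\<lambda>y. ennreal (indicator \<Omega> y * \<phi>2 y))}"

definition wasserstein :: "(real^'n) set \<Rightarrow> (real^'n \<Rightarrow> real) \<Rightarrow> (real^'n \<Rightarrow> real) \<Rightarrow> ennreal" where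
  "wasserstein \<Omega> \<phi>1 \<phi>2 =
     (INF \<gamma>\<in>couplings \<Omega> \<phi>1 \<phi>2. \<integral>\<^sup>+ z. ennreal (norm (snd z - fst z)) \<partial>\<gamma>)"

definition is_density_on :: "(real^'n::finite) set \<Rightarrow> (real^'n \<Rightarrow> real) \<Rightarrow> bool" where
  "is_density_on \<Omega> \<phi> \<longleftrightarrow> \<phi> \<in> borel_measurable lborel \<and> (\<forall>x\<in>\<Omega>. \<phi> x \<ge> 0) \<and>
     set_integrable lborel \<Omega> \<phi> \<and> (LINT x:\<Omega>|lborel. \<phi> x) = 1"

end

theory Submission imports Defs begin

lemma cell_meas[measurable]: "cell a L r k \<in> sets lborel"
  unfolding cell_def grid_index_def hcube_def fun_eq_iff
  by measurable

lemma cell_sub: "cell a L r k \<subseteq> hcube a L"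
  unfolding cell_def by auto

lemma grid_in: "r \<ge> 1 \<Longrightarrow> grid_index a L r x \<in> cell_indices r"
  unfolding cell_indices_def grid_index_def by auto

lemma finite_K: "finite (cell_indices r :: ('n::finite) cidx set)"
proof -
  have "cell_indices r = (PiE UNIV (\<lambda>_::'n. {..<r}))"
    unfolding cell_indices_def by (auto simp: PiE_def Pi_def extensional_def)
  thus ?thesis by (simp add: finite_PiE)
qed

lemma sum_ind:
  fixes y :: "real^'n::finite"
  assumes "r \<ge> 1"
  shows "(\<Sum>i\<in>cell_indices r. (indicator (cell a L r i) y :: 'a::{comm_monoid_add,zero_neq_one}))
         = indicator (hcube a L) y"
proof -
  have "\<And>i. (indicator (cell a L r i) y :: 'a) = (if grid_index a L r y = i then indicator (hcube a L) y else 0)"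
    unfolding cell_def indicator_def by auto
  hence "(\<Sum>i\<in>cell_indices r. (indicator (cell a L r i) y :: 'a)) =
     (\<Sum>i\<in>cell_indices r. (if grid_index a L r y = i then indicator (hcube a L) y else 0))"
    by simp
  also have "\<dots> = indicator (hcube a L) y"
    using grid_in[OF assms] finite_K by (subst sum.delta') auto
  finally show ?thesis .
qed

lemma cell_disj: "i \<noteq> j \<Longrightarrow> cell a L r i \<inter> cell a L r j = {}"
  unfolding cell_def by auto

lemma disj1: "disjoint_family_on (\<lambda>j. A \<times> cell a L r j) K"
  unfolding disjoint_family_on_def cell_def by auto

lemma disj2: "disjoint_family_on (\<lambda>i. cell a L r i \<times> B) K"
  unfolding disjoint_family_on_def cell_def by auto

lemma cell_Union: "r \<ge> 1 \<Longrightarrow> (\<Union>i\<in>cell_indices r. cell a L r i) = hcube a L"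
  using grid_in unfolding cell_def by blast

lemma cell_ccell:
  assumes "L > 0" "r \<ge> 1"
  shows "cell a L r k \<subseteq> ccell a L r k"
proof
  fix x assume x: "x \<in> cell a L r k"
  hence xh: "x \<in> hcube a L" and gk: "grid_index a L r x = k" by (auto simp: cell_def)
  show "x \<in> ccell a L r k"
    unfolding ccell_def mem_box_cart
  proof (intro allI conjI)
    fix m
    define t where "t = (x$m - a$m) * real r / L"
    have b: "a$m \<le> x$m" "x$m \<le> a$m + L" using xh by (auto simp: hcube_def mem_box_cart)
    have t0: "t \<ge> 0" unfolding t_def using b assms by auto
    have tr: "t \<le> real r" unfolding t_def using b assms by (simp add: divide_le_eq mult.commute)
    have km: "k m = min (r - 1) (nat \<lfloor>t\<rfloor>)" using gk unfolding grid_index_def t_def by auto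
    have "real (k m) \<le> t"
    proof -
      have "real (k m) \<le> real (nat \<lfloor>t\<rfloor>)" using km by simp
      also have "\<dots> \<le> t" using t0 by linarith
      finally show ?thesis .
    qed
    hence "real (k m) * L / real r \<le> x$m - a$m"
      unfolding t_def using assms by (simp add: field_simps)
    thus "(\<chi> i. a $ i + real (k i) * L / real r) $ m \<le> x $ m" by simp
    have "t \<le> real (k m) + 1"
    proof (cases "nat \<lfloor>t\<rfloor> \<le> r - 1")
      case True
      hence "k m = nat \<lfloor>t\<rfloor>" using km by simp
      thus ?thesis using t0 by linarith
    next
      case False
      hence "k m = r - 1" using km by simp
      thus ?thesis using tr assms by simp
    qed
    hence "x$m - a$m \<le> (real (k m) + 1) * L / real r"
      unfolding t_def using assms by (simp add: field_simps)
    thus "x $ m \<le> (\<chi> i. a $ i + real (k i + 1) * L / real r) $ m" by (simp add: algebra_simps)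
  qed
qed

lemma ccell_ne:
  assumes "L > 0" "r \<ge> 1"
  shows "ccell a L r k \<noteq> {}"
proof -
  have "(\<chi> i. a$i + real (k i) * L / real r) \<in> ccell a L r k"
    unfolding ccell_def mem_box_cart using assms by (auto intro!: divide_right_mono)
  thus ?thesis by auto
qed

lemma ccell_diam:
  fixes x x' :: "real^'n::finite" and k :: "'n cidx"
  assumes "L > 0" "r \<ge> 1" "x \<in> ccell a L r k" "x' \<in> ccell a L r k"
  shows "norm (x - x') \<le> L * sqrt (real CARD('n)) / real r" (is "_ \<le> ?D")
    and "norm (x' - x) \<le> L * sqrt (real CARD('n)) / real r"
proof -
  have c: "\<bar>(x - x')$m\<bar> \<le> L / real r" for m :: 'n
  proof -
    have "a$m + real (k m) * L / real r \<le> x$m" "x$m \<le> a$m + real (k m + 1) * L / real r"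
      "a$m + real (k m) * L / real r \<le> x'$m" "x'$m \<le> a$m + real (k m + 1) * L / real r"
      using assms(3,4) unfolding ccell_def mem_box_cart by auto
    moreover have "real (k m + 1) * L / real r = real (k m) * L / real r + L / real r"
      by (simp add: add_divide_distrib distrib_right)
    ultimately show ?thesis by simp
  qed
  have "norm (x - x') = sqrt (\<Sum>m\<in>UNIV. ((x - x')$m)^2)"
    by (simp add: norm_vec_def L2_set_def)
  also have "\<dots> \<le> sqrt (\<Sum>m\<in>(UNIV::'n set). (L / real r)^2)"
    using c by (intro real_sqrt_le_mono sum_mono) (metis abs_le_square_iff abs_of_nonneg assms(1,2) divide_nonneg_nonneg less_imp_le of_nat_0_le_iff abs_abs)
  also have "\<dots> = ?D"
    using assms by (simp add: real_sqrt_mult)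
  finally show "norm (x - x') \<le> ?D" .
  thus "norm (x' - x) \<le> ?D" by (simp add: norm_minus_commute)
qed

lemma cost_bounds:
  fixes x y :: "real^'n::finite"
  assumes "L > 0" "r \<ge> 1" "x \<in> ccell a L r j" "y \<in> ccell a L r i"
  shows "norm (x - y) \<le> cell_cost a L r i j"
    and "cell_cost a L r i j \<le> norm (x - y) + 2 * (L * sqrt (real CARD('n)) / real r)"
proof -
  let ?D = "L * sqrt (real CARD('n)) / real r"
  let ?S = "{norm (x - y) | x y. y \<in> ccell a L r i \<and> x \<in> ccell a L r j}"
  have ub: "s \<le> norm (x - y) + 2 * ?D" if "s \<in> ?S" for s
  proof -
    obtain x' y' where s: "s = norm (x' - y')" "y' \<in> ccell a L r i" "x' \<in> ccell a L r j"
      using \<open>s \<in> ?S\<close> by blast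
    have "norm (x' - y') \<le> norm (x' - x) + norm (x - y) + norm (y - y')"
    proof -
      have "x' - y' = (x' - x) + (x - y) + (y - y')" by simp
      hence "norm (x' - y') \<le> norm ((x' - x) + (x - y)) + norm (y - y')"
        by (metis norm_triangle_ineq)
      also have "\<dots> \<le> norm (x' - x) + norm (x - y) + norm (y - y')"
        by (rule add_right_mono, rule norm_triangle_ineq)
      finally show ?thesis .
    qed
    also have "\<dots> \<le> ?D + norm (x - y) + ?D"
      using ccell_diam[OF assms(1,2) s(3) assms(3)] ccell_diam[OF assms(1,2) assms(4) s(2)]
      by (intro add_mono) auto
    finally show ?thesis using s by simp
  qed
  have mem: "norm (x - y) \<in> ?S" using assms by blast
  have bdd: "bdd_above ?S" using ub by (intro bdd_aboveI) 
  show "norm (x - y) \<le> cell_cost a L r i j"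
    unfolding cell_cost_def by (rule cSup_upper[OF mem bdd])
  show "cell_cost a L r i j \<le> norm (x - y) + 2 * ?D"
    unfolding cell_cost_def
  proof (rule cSup_least)
    show "?S \<noteq> {}" using mem by blast
  next
    fix s assume "s \<in> ?S" thus "s \<le> norm (x - y) + 2 * ?D" by (rule ub)
  qed
qed

lemma mass:
  assumes "is_density_on (hcube a L) \<phi>" "A \<in> sets lborel" "A \<subseteq> hcube a L"
  shows "(\<integral>\<^sup>+x. ennreal (indicator A x * \<phi> x) \<partial>lborel) = ennreal (cmass \<phi> A)"
    and "cmass \<phi> A \<ge> 0"
proof -
  have si: "set_integrable lborel (hcube a L) \<phi>" and nn: "\<And>x. x \<in> hcube a L \<Longrightarrow> \<phi> x \<ge> 0"
    using assms(1) unfolding is_density_on_def by auto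
  have "set_integrable lborel A \<phi>" by (rule set_integrable_subset[OF si assms(2,3)])
  hence int: "integrable lborel (\<lambda>x. indicator A x * \<phi> x)" unfolding set_integrable_def by simp
  have nn2: "\<And>x. indicator A x * \<phi> x \<ge> 0" using nn assms(3) by (auto simp: indicator_def)
  show "(\<integral>\<^sup>+x. ennreal (indicator A x * \<phi> x) \<partial>lborel) = ennreal (cmass \<phi> A)"
    unfolding cmass_def set_lebesgue_integral_def
    using nn_integral_eq_integral[OF int] nn2 by simp
  show "cmass \<phi> A \<ge> 0" unfolding cmass_def set_lebesgue_integral_def
    using nn2 by (simp add: integral_nonneg)
qed

lemma prod_nn:
  fixes F G :: "real^'n::finite \<Rightarrow> ennreal"
  assumes [measurable]: "F \<in> borel_measurable lborel" "G \<in> borel_measurable lborel"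
  shows "(\<integral>\<^sup>+z. F (fst z) * G (snd z) \<partial>(lborel \<Otimes>\<^sub>M lborel)) =
           (\<integral>\<^sup>+x. F x \<partial>lborel) * (\<integral>\<^sup>+x. G x \<partial>lborel)"
proof -
  have "(\<integral>\<^sup>+z. F (fst z) * G (snd z) \<partial>(lborel \<Otimes>\<^sub>M lborel)) =
        (\<integral>\<^sup>+x. \<integral>\<^sup>+y. F x * G y \<partial>lborel \<partial>lborel)"
    by (subst lborel.nn_integral_fst[symmetric]) auto
  also have "\<dots> = (\<integral>\<^sup>+x. F x * (\<integral>\<^sup>+y. G y \<partial>lborel) \<partial>lborel)"
    by (simp add: nn_integral_cmult)
  also have "\<dots> = (\<integral>\<^sup>+x. F x \<partial>lborel) * (\<integral>\<^sup>+x. G x \<partial>lborel)"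
    by (simp add: nn_integral_multc)
  finally show ?thesis .
qed

lemma cost_nonneg:
  assumes "L > 0" "r \<ge> 1"
  shows "cell_cost a L r i j \<ge> 0"
proof -
  obtain x where x: "x \<in> ccell a L r j" using ccell_ne[OF assms] by blast
  obtain y where y: "y \<in> ccell a L r i" using ccell_ne[OF assms] by blast
  show ?thesis using cost_bounds(1)[OF assms x y] norm_ge_zero order_trans by blast
qed

lemma sum2_ennreal:
  assumes "\<And>i j. i \<in> I \<Longrightarrow> j \<in> J \<Longrightarrow> 0 \<le> f i j"
  shows "ennreal (\<Sum>i\<in>I. \<Sum>j\<in>J. f i j) = (\<Sum>i\<in>I. \<Sum>j\<in>J. ennreal (f i j))"
proof -
  have "(\<Sum>i\<in>I. \<Sum>j\<in>J. ennreal (f i j)) = (\<Sum>i\<in>I. ennreal (\<Sum>j\<in>J. f i j))"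
    using assms by (intro sum.cong refl sum_ennreal) auto
  also have "\<dots> = ennreal (\<Sum>i\<in>I. \<Sum>j\<in>J. f i j)"
    using assms by (intro sum_ennreal sum_nonneg) auto
  finally show ?thesis by simp
qed

lemma partA:
  fixes a :: "real^'n::finite" and \<alpha> :: "'n cidx \<Rightarrow> 'n cidx \<Rightarrow> real"
  assumes L: "L > 0" and r: "r \<ge> 1"
    and dP: "is_density_on (hcube a L) \<phi>P"
    and dD: "is_density_on (hcube a L) \<phi>D"
    and feas: "lp_feasible a L r \<phi>P \<phi>D \<alpha>"
  shows "shadow_expected_dist a L r \<phi>P \<phi>D \<alpha> \<le> ennreal (lp_cost a L r \<alpha>)"
proof -
  let ?K = "cell_indices r :: 'n cidx set"
  let ?C = "cell a L r"
  define mD where "mD i = cmass \<phi>D (?C i)" for i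
  define mP where "mP j = cmass \<phi>P (?C j)" for j
  define t where "t i j y x = indicator (?C i) y * \<phi>D y * (\<alpha> i j / mD i)
         * (indicator (?C j) x * \<phi>P x / mP j)" for i j y x
  have [measurable]: "\<phi>P \<in> borel_measurable lborel" "\<phi>D \<in> borel_measurable lborel"
    using dP dD unfolding is_density_on_def by auto
  have nnP: "\<And>x. x \<in> hcube a L \<Longrightarrow> \<phi>P x \<ge> 0" and nnD: "\<And>x. x \<in> hcube a L \<Longrightarrow> \<phi>D x \<ge> 0"
    using dP dD unfolding is_density_on_def by auto
  have mD0: "mD i \<ge> 0" for i unfolding mD_def by (rule mass(2)[OF dD cell_meas cell_sub])
  have mP0: "mP i \<ge> 0" for i unfolding mP_def by (rule mass(2)[OF dP cell_meas cell_sub])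
  have a0: "\<And>i j. i \<in> ?K \<Longrightarrow> j \<in> ?K \<Longrightarrow> \<alpha> i j \<ge> 0"
    using feas unfolding lp_feasible_def by auto
  have iD: "\<And>y. indicator (?C i) y * \<phi>D y \<ge> 0" for i
    using nnD cell_sub[of a L r i] by (auto simp: indicator_def)
  have iP: "\<And>y. indicator (?C i) y * \<phi>P y \<ge> 0" for i
    using nnP cell_sub[of a L r i] by (auto simp: indicator_def)
  have t0: "t i j y x \<ge> 0" if "i \<in> ?K" "j \<in> ?K" for i j y x
    unfolding t_def using iD[of i y] iP[of j x] a0[OF that] mD0[of i] mP0[of j]
    by (simp add: mult_nonneg_nonneg divide_nonneg_nonneg)
  have tm[measurable]: "(\<lambda>z. t i j (fst z) (snd z)) \<in> borel_measurable (lborel \<Otimes>\<^sub>M lborel)" for i j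
    unfolding t_def by measurable
  have step1: "shadow_expected_dist a L r \<phi>P \<phi>D \<alpha> =
     (\<integral>\<^sup>+z. ennreal (\<Sum>i\<in>?K. \<Sum>j\<in>?K. t i j (fst z) (snd z)) * ennreal (norm (snd z - fst z))
        \<partial>(lborel \<Otimes>\<^sub>M lborel))"
    unfolding shadow_expected_dist_def shadow_law_def
    by (subst nn_integral_density) (auto simp: split_beta t_def mD_def mP_def)
  have step2: "ennreal (\<Sum>i\<in>?K. \<Sum>j\<in>?K. t i j (fst z) (snd z)) * ennreal (norm (snd z - fst z))
      \<le> (\<Sum>i\<in>?K. \<Sum>j\<in>?K. ennreal (t i j (fst z) (snd z) * cell_cost a L r i j))" for z
  proof -
    obtain y x where z: "z = (y, x)" by (cases z)
    have pw: "t i j y x * norm (x - y) \<le> t i j y x * cell_cost a L r i j" if "i \<in> ?K" "j \<in> ?K" for i j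
    proof (cases "y \<in> ?C i \<and> x \<in> ?C j")
      case True
      hence "norm (x - y) \<le> cell_cost a L r i j"
        using cost_bounds(1)[OF L r] cell_ccell[OF L r] by blast
      thus ?thesis using t0[OF that] by (rule mult_left_mono)
    next
      case False
      hence "t i j y x = 0" unfolding t_def by auto
      thus ?thesis by simp
    qed
    have "ennreal (\<Sum>i\<in>?K. \<Sum>j\<in>?K. t i j y x) * ennreal (norm (x - y))
        = ennreal ((\<Sum>i\<in>?K. \<Sum>j\<in>?K. t i j y x) * norm (x - y))"
      by (rule ennreal_mult''[symmetric]) simp
    also have "\<dots> = ennreal (\<Sum>i\<in>?K. \<Sum>j\<in>?K. t i j y x * norm (x - y))"
      by (simp add: sum_distrib_right)
    also have "\<dots> \<le> ennreal (\<Sum>i\<in>?K. \<Sum>j\<in>?K. t i j y x * cell_cost a L r i j)"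
      using pw by (intro ennreal_leI sum_mono) auto
    also have "\<dots> = (\<Sum>i\<in>?K. \<Sum>j\<in>?K. ennreal (t i j y x * cell_cost a L r i j))"
      using t0 cost_nonneg[OF L r]
      by (intro sum2_ennreal mult_nonneg_nonneg) auto
    finally show ?thesis using z by simp
  qed
  have step4: "(\<integral>\<^sup>+z. ennreal (t i j (fst z) (snd z) * cell_cost a L r i j) \<partial>(lborel \<Otimes>\<^sub>M lborel))
       \<le> ennreal (\<alpha> i j * cell_cost a L r i j)" if ij: "i \<in> ?K" "j \<in> ?K" for i j
  proof -
    define c where "c = \<alpha> i j / mD i / mP j * cell_cost a L r i j"
    have c0: "c \<ge> 0" unfolding c_def using a0[OF ij] mD0[of i] mP0[of j] cost_nonneg[OF L r, of a i j]
      by (intro mult_nonneg_nonneg divide_nonneg_nonneg) auto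
    have eq: "ennreal (t i j (fst z) (snd z) * cell_cost a L r i j) =
       ennreal c * (ennreal (indicator (?C i) (fst z) * \<phi>D (fst z)) *
                     ennreal (indicator (?C j) (snd z) * \<phi>P (snd z)))" for z
    proof -
      have "t i j (fst z) (snd z) * cell_cost a L r i j =
         c * ((indicator (?C i) (fst z) * \<phi>D (fst z)) * (indicator (?C j) (snd z) * \<phi>P (snd z)))"
        unfolding t_def c_def by (simp add: field_simps)
      thus ?thesis using c0 iD iP by (simp add: ennreal_mult mult_nonneg_nonneg)
    qed
    have "(\<integral>\<^sup>+z. ennreal (t i j (fst z) (snd z) * cell_cost a L r i j) \<partial>(lborel \<Otimes>\<^sub>M lborel))
       = ennreal c * (\<integral>\<^sup>+z. ennreal (indicator (?C i) (fst z) * \<phi>D (fst z)) *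
                     ennreal (indicator (?C j) (snd z) * \<phi>P (snd z)) \<partial>(lborel \<Otimes>\<^sub>M lborel))"
      unfolding eq by (subst nn_integral_cmult) auto
    also have "\<dots> = ennreal c * (ennreal (mD i) * ennreal (mP j))"
      by (subst prod_nn) (auto simp: mD_def mP_def mass(1)[OF dD cell_meas cell_sub] mass(1)[OF dP cell_meas cell_sub])
    also have "\<dots> = ennreal (c * mD i * mP j)"
      using c0 mD0 mP0 by (simp add: ennreal_mult mult.assoc)
    also have "\<dots> \<le> ennreal (\<alpha> i j * cell_cost a L r i j)"
    proof (rule ennreal_leI)
      have "c * mD i * mP j = (\<alpha> i j * cell_cost a L r i j) * ((mD i / mD i) * (mP j / mP j))"
        unfolding c_def by (simp add: field_simps)
      also have "\<dots> \<le> (\<alpha> i j * cell_cost a L r i j) * 1"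
        using a0[OF ij] cost_nonneg[OF L r, of a i j]
        by (intro mult_left_mono) (auto simp: mult_le_one)
      finally show "c * mD i * mP j \<le> \<alpha> i j * cell_cost a L r i j" by simp
    qed
    finally show ?thesis .
  qed
  have "shadow_expected_dist a L r \<phi>P \<phi>D \<alpha> \<le>
     (\<integral>\<^sup>+z. (\<Sum>i\<in>?K. \<Sum>j\<in>?K. ennreal (t i j (fst z) (snd z) * cell_cost a L r i j)) \<partial>(lborel \<Otimes>\<^sub>M lborel))"
    unfolding step1 by (intro nn_integral_mono step2)
  also have "\<dots> = (\<Sum>i\<in>?K. \<Sum>j\<in>?K. \<integral>\<^sup>+z. ennreal (t i j (fst z) (snd z) * cell_cost a L r i j) \<partial>(lborel \<Otimes>\<^sub>M lborel))"
    by (simp add: nn_integral_sum)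
  also have "\<dots> \<le> (\<Sum>i\<in>?K. \<Sum>j\<in>?K. ennreal (\<alpha> i j * cell_cost a L r i j))"
    using step4 by (intro sum_mono) auto
  also have "\<dots> = ennreal (lp_cost a L r \<alpha>)"
    unfolding lp_cost_def using a0 cost_nonneg[OF L r]
    by (intro sum2_ennreal[symmetric] mult_nonneg_nonneg) auto
  finally show ?thesis .
qed

lemma hcube_meas[measurable]: "hcube a L \<in> sets lborel"
  unfolding hcube_def by simp

lemma partB:
  fixes a :: "real^'n::finite" and \<alpha> :: "'n cidx \<Rightarrow> 'n cidx \<Rightarrow> real"
  assumes L: "L > 0" and r: "r \<ge> 1"
    and dP: "is_density_on (hcube a L) \<phi>P"
    and dD: "is_density_on (hcube a L) \<phi>D"
    and opt: "lp_optimal a L r \<phi>P \<phi>D \<alpha>"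
    and g: "\<gamma> \<in> couplings (hcube a L) \<phi>D \<phi>P"
  shows "ennreal (lp_cost a L r \<alpha>) \<le> (\<integral>\<^sup>+z. ennreal (norm (snd z - fst z)) \<partial>\<gamma>)
           + ennreal (2 * (L * sqrt (real CARD('n)) / real r))"
proof -
  let ?K = "cell_indices r :: 'n cidx set"
  let ?C = "cell a L r"
  let ?H = "hcube a L"
  let ?D = "L * sqrt (real CARD('n)) / real r"
  have sg: "sets \<gamma> = sets (lborel \<Otimes>\<^sub>M lborel)"
    and null: "emeasure \<gamma> (space \<gamma> - ?H \<times> ?H) = 0"
    and mf: "distr \<gamma> lborel fst = density lborel (\<lambda>x. ennreal (indicator ?H x * \<phi>D x))"
    and ms: "distr \<gamma> lborel snd = density lborel (\<lambda>x. ennreal (indicator ?H x * \<phi>P x))"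
    using g unfolding couplings_def by auto
  have sp: "space \<gamma> = UNIV"
    using sets_eq_imp_space_eq[OF sg] by (simp add: space_pair_measure)
  have mc: "measurable \<gamma> N = measurable (lborel \<Otimes>\<^sub>M lborel) N" for N :: "'b measure"
    by (rule measurable_cong_sets[OF sg refl])
  have meas: "h \<in> borel_measurable \<gamma>" if "h \<in> borel_measurable (lborel \<Otimes>\<^sub>M lborel)" for h :: "_ \<Rightarrow> ennreal"
    using that unfolding mc .
  have fstm: "fst \<in> measurable \<gamma> lborel" and sndm: "snd \<in> measurable \<gamma> lborel"
    unfolding mc by simp_all
  have setsI: "A \<times> B \<in> sets \<gamma>" if "A \<in> sets lborel" "B \<in> sets lborel" for A B
    unfolding sg using that by (rule pair_measureI)
  have [measurable]: "\<phi>P \<in> borel_measurable lborel" "\<phi>D \<in> borel_measurable lborel"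
    using dP dD unfolding is_density_on_def by auto
  have margD: "emeasure \<gamma> (A \<times> UNIV) = ennreal (cmass \<phi>D A)" if A: "A \<in> sets lborel" "A \<subseteq> ?H" for A
  proof -
    have "emeasure \<gamma> (A \<times> UNIV) = emeasure (distr \<gamma> lborel fst) A"
      using A by (subst emeasure_distr[OF fstm]) (auto simp: sp vimage_fst)
    also have "\<dots> = (\<integral>\<^sup>+x. ennreal (indicator ?H x * \<phi>D x) * indicator A x \<partial>lborel)"
      unfolding mf using A by (subst emeasure_density) auto
    also have "\<dots> = (\<integral>\<^sup>+x. ennreal (indicator A x * \<phi>D x) \<partial>lborel)"
      using A by (intro nn_integral_cong) (auto simp: indicator_def)
    also have "\<dots> = ennreal (cmass \<phi>D A)" by (rule mass(1)[OF dD A])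
    finally show ?thesis .
  qed
  have margP: "emeasure \<gamma> (UNIV \<times> A) = ennreal (cmass \<phi>P A)" if A: "A \<in> sets lborel" "A \<subseteq> ?H" for A
  proof -
    have "emeasure \<gamma> (UNIV \<times> A) = emeasure (distr \<gamma> lborel snd) A"
      using A by (subst emeasure_distr[OF sndm]) (auto simp: sp vimage_snd)
    also have "\<dots> = (\<integral>\<^sup>+x. ennreal (indicator ?H x * \<phi>P x) * indicator A x \<partial>lborel)"
      unfolding ms using A by (subst emeasure_density) auto
    also have "\<dots> = (\<integral>\<^sup>+x. ennreal (indicator A x * \<phi>P x) \<partial>lborel)"
      using A by (intro nn_integral_cong) (auto simp: indicator_def)
    also have "\<dots> = ennreal (cmass \<phi>P A)" by (rule mass(1)[OF dP A])
    finally show ?thesis .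
  qed
  have tot: "emeasure \<gamma> (space \<gamma>) = 1"
  proof -
    have "emeasure \<gamma> (space \<gamma>) = emeasure (distr \<gamma> lborel fst) UNIV"
      by (subst emeasure_distr[OF fstm]) (auto simp: sp)
    also have "\<dots> = (\<integral>\<^sup>+x. ennreal (indicator ?H x * \<phi>D x) * indicator UNIV x \<partial>lborel)"
      unfolding mf by (subst emeasure_density) auto
    also have "\<dots> = ennreal (cmass \<phi>D ?H)"
      using mass(1)[OF dD hcube_meas order_refl] by simp
    finally have "emeasure \<gamma> (space \<gamma>) = ennreal (cmass \<phi>D ?H)" .
    also have "cmass \<phi>D ?H = 1" using dD unfolding is_density_on_def cmass_def by simp
    finally show ?thesis by simp
  qed
  interpret finite_measure \<gamma> by (rule finite_measureI) (simp add: tot)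
  have nullset: "space \<gamma> - ?H \<times> ?H \<in> null_sets \<gamma>"
    using null setsI[OF hcube_meas hcube_meas] by (intro null_setsI) auto
  have UNIVs: "UNIV \<in> sets lborel" by simp
  have rowD: "emeasure \<gamma> (A \<times> ?H) = emeasure \<gamma> (A \<times> UNIV)" if A: "A \<in> sets lborel" for A
  proof -
    have eq: "A \<times> UNIV = (A \<times> ?H) \<union> (A \<times> UNIV - A \<times> ?H)" by auto
    have s1: "A \<times> UNIV - A \<times> ?H \<in> sets \<gamma>"
      by (rule sets.Diff[OF setsI[OF A UNIVs] setsI[OF A hcube_meas]])
    have sub: "A \<times> UNIV - A \<times> ?H \<subseteq> space \<gamma> - ?H \<times> ?H" unfolding sp by auto
    have nl: "A \<times> UNIV - A \<times> ?H \<in> null_sets \<gamma>"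
      by (rule null_sets_subset[OF nullset s1 sub])
    have "emeasure \<gamma> (A \<times> UNIV) = emeasure \<gamma> ((A \<times> ?H) \<union> (A \<times> UNIV - A \<times> ?H))"
      using eq by (rule arg_cong)
    also have "\<dots> = emeasure \<gamma> (A \<times> ?H)"
      by (rule emeasure_Un_null_set[OF setsI[OF A hcube_meas] nl])
    finally show ?thesis by (rule sym)
  qed
  have colP: "emeasure \<gamma> (?H \<times> A) = emeasure \<gamma> (UNIV \<times> A)" if A: "A \<in> sets lborel" for A
  proof -
    have eq: "UNIV \<times> A = (?H \<times> A) \<union> (UNIV \<times> A - ?H \<times> A)" by auto
    have s1: "UNIV \<times> A - ?H \<times> A \<in> sets \<gamma>"
      by (rule sets.Diff[OF setsI[OF UNIVs A] setsI[OF hcube_meas A]])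
    have sub: "UNIV \<times> A - ?H \<times> A \<subseteq> space \<gamma> - ?H \<times> ?H" unfolding sp by auto
    have nl: "UNIV \<times> A - ?H \<times> A \<in> null_sets \<gamma>"
      by (rule null_sets_subset[OF nullset s1 sub])
    have "emeasure \<gamma> (UNIV \<times> A) = emeasure \<gamma> ((?H \<times> A) \<union> (UNIV \<times> A - ?H \<times> A))"
      using eq by (rule arg_cong)
    also have "\<dots> = emeasure \<gamma> (?H \<times> A)"
      by (rule emeasure_Un_null_set[OF setsI[OF hcube_meas A] nl])
    finally show ?thesis by (rule sym)
  qed
  define \<beta> where "\<beta> i j = measure \<gamma> (?C i \<times> ?C j)" for i j
  have cm0: "cmass \<phi>D (?C i) \<ge> 0" "cmass \<phi>P (?C i) \<ge> 0" for i
    using mass(2)[OF dD cell_meas cell_sub] mass(2)[OF dP cell_meas cell_sub] by auto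
  have rows: "(\<Sum>j\<in>?K. \<beta> i j) = cmass \<phi>D (?C i)" for i
  proof -
    have "(\<Sum>j\<in>?K. \<beta> i j) = measure \<gamma> (\<Union>j\<in>?K. ?C i \<times> ?C j)"
      unfolding \<beta>_def
      by (intro finite_measure_finite_Union[symmetric] finite_K disj1 disj2) (auto intro!: setsI cell_meas[unfolded sets_lborel])
    also have "(\<Union>j\<in>?K. ?C i \<times> ?C j) = ?C i \<times> ?H" using cell_Union[OF r] by blast
    also have "measure \<gamma> (?C i \<times> ?H) = cmass \<phi>D (?C i)"
    proof -
      have "ennreal (measure \<gamma> (?C i \<times> ?H)) = ennreal (cmass \<phi>D (?C i))"
        using rowD[OF cell_meas] margD[OF cell_meas cell_sub] by (simp add: emeasure_eq_measure)
      thus ?thesis using cm0 by (subst (asm) ennreal_inj) auto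
    qed
    finally show ?thesis .
  qed
  have cols: "(\<Sum>i\<in>?K. \<beta> i j) = cmass \<phi>P (?C j)" for j
  proof -
    have "(\<Sum>i\<in>?K. \<beta> i j) = measure \<gamma> (\<Union>i\<in>?K. ?C i \<times> ?C j)"
      unfolding \<beta>_def
      by (intro finite_measure_finite_Union[symmetric] finite_K disj1 disj2) (auto intro!: setsI cell_meas[unfolded sets_lborel])
    also have "(\<Union>i\<in>?K. ?C i \<times> ?C j) = ?H \<times> ?C j" using cell_Union[OF r] by blast
    also have "measure \<gamma> (?H \<times> ?C j) = cmass \<phi>P (?C j)"
    proof -
      have "ennreal (measure \<gamma> (?H \<times> ?C j)) = ennreal (cmass \<phi>P (?C j))"
        using colP[OF cell_meas] margP[OF cell_meas cell_sub] by (simp add: emeasure_eq_measure)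
      thus ?thesis using cm0 by (subst (asm) ennreal_inj) auto
    qed
    finally show ?thesis .
  qed
  have feas: "lp_feasible a L r \<phi>P \<phi>D \<beta>"
    unfolding lp_feasible_def using rows cols by (simp add: \<beta>_def)
  have le1: "lp_cost a L r \<alpha> \<le> lp_cost a L r \<beta>"
    using opt feas unfolding lp_optimal_def by blast
  have c0: "\<And>i j. cell_cost a L r i j \<ge> 0" using cost_nonneg[OF L r] by blast
  have pw: "ennreal (cell_cost a L r i j) * indicator (?C i \<times> ?C j) z \<le>
            (ennreal (norm (snd z - fst z)) + ennreal (2 * ?D)) * indicator (?C i \<times> ?C j) z" for i j z
  proof (cases "z \<in> ?C i \<times> ?C j")
    case True
    obtain y x where z: "z = (y, x)" by (cases z)
    have y: "y \<in> ccell a L r i" using True z cell_ccell[OF L r, of a i] by auto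
    have x: "x \<in> ccell a L r j" using True z cell_ccell[OF L r, of a j] by auto
    have "cell_cost a L r i j \<le> norm (snd z - fst z) + 2 * ?D"
      using cost_bounds(2)[OF L r x y] z by simp
    hence "ennreal (cell_cost a L r i j) \<le> ennreal (norm (snd z - fst z) + 2 * ?D)"
      by (rule ennreal_leI)
    also have "\<dots> = ennreal (norm (snd z - fst z)) + ennreal (2 * ?D)"
      using L by (intro ennreal_plus) auto
    finally show ?thesis using True by simp
  qed simp
  have ind1: "(\<Sum>i\<in>?K. \<Sum>j\<in>?K. (indicator (?C i \<times> ?C j) z :: ennreal)) \<le> 1" for z
  proof -
    have "(\<Sum>i\<in>?K. \<Sum>j\<in>?K. (indicator (?C i \<times> ?C j) z :: ennreal)) =
          (\<Sum>i\<in>?K. (indicator (?C i) (fst z) :: ennreal)) * (\<Sum>j\<in>?K. indicator (?C j) (snd z))"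
      by (simp add: sum_product indicator_times split_beta)
    also have "\<dots> = indicator ?H (fst z) * indicator ?H (snd z)"
      by (simp add: sum_ind[OF r])
    also have "\<dots> \<le> 1" by (simp add: indicator_def)
    finally show ?thesis .
  qed
  have "ennreal (lp_cost a L r \<alpha>) \<le> ennreal (lp_cost a L r \<beta>)" using le1 by (rule ennreal_leI)
  also have "\<dots> = (\<Sum>i\<in>?K. \<Sum>j\<in>?K. ennreal (\<beta> i j * cell_cost a L r i j))"
    unfolding lp_cost_def using c0 by (intro sum2_ennreal) (auto simp: \<beta>_def)
  also have "\<dots> = (\<Sum>i\<in>?K. \<Sum>j\<in>?K. \<integral>\<^sup>+z. ennreal (cell_cost a L r i j) * indicator (?C i \<times> ?C j) z \<partial>\<gamma>)"
    using c0
    by (intro sum.cong refl, subst nn_integral_cmult_indicator)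
       (auto intro!: setsI cell_meas[unfolded sets_lborel] simp: \<beta>_def emeasure_eq_measure ennreal_mult mult.commute)
  also have "\<dots> \<le> (\<Sum>i\<in>?K. \<Sum>j\<in>?K. \<integral>\<^sup>+z. (ennreal (norm (snd z - fst z)) + ennreal (2 * ?D)) * indicator (?C i \<times> ?C j) z \<partial>\<gamma>)"
    by (intro sum_mono nn_integral_mono pw)
  also have "\<dots> = (\<integral>\<^sup>+z. (\<Sum>i\<in>?K. \<Sum>j\<in>?K. (ennreal (norm (snd z - fst z)) + ennreal (2 * ?D)) * indicator (?C i \<times> ?C j) z) \<partial>\<gamma>)"
  proof -
    have mi: "(\<lambda>z. (ennreal (norm (snd z - fst z)) + ennreal (2 * ?D)) * indicator (?C i \<times> ?C j) z) \<in> borel_measurable \<gamma>" for i j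
      by (rule meas) measurable
    have mi2: "(\<lambda>z. \<Sum>j\<in>?K. (ennreal (norm (snd z - fst z)) + ennreal (2 * ?D)) * indicator (?C i \<times> ?C j) z) \<in> borel_measurable \<gamma>" for i
      using mi by (intro borel_measurable_sum) auto
    show ?thesis
      using mi mi2 by (simp add: nn_integral_sum)
  qed
  also have "\<dots> = (\<integral>\<^sup>+z. (ennreal (norm (snd z - fst z)) + ennreal (2 * ?D)) * (\<Sum>i\<in>?K. \<Sum>j\<in>?K. indicator (?C i \<times> ?C j) z) \<partial>\<gamma>)"
    by (simp add: sum_distrib_left)
  also have "\<dots> \<le> (\<integral>\<^sup>+z. (ennreal (norm (snd z - fst z)) + ennreal (2 * ?D)) \<partial>\<gamma>)"
    by (intro nn_integral_mono, rule order_trans[OF mult_left_mono[OF ind1 zero_le]]) simp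
  also have "\<dots> = (\<integral>\<^sup>+z. ennreal (norm (snd z - fst z)) \<partial>\<gamma>) + ennreal (2 * ?D)"
  proof -
    have mnr: "(\<lambda>z. norm (snd z - fst z)) \<in> borel_measurable \<gamma>"
      unfolding mc by measurable
    show ?thesis by (subst nn_integral_add) (auto intro!: mnr simp: tot)
  qed
  finally show ?thesis .
qed

theorem lemma8:
  fixes a :: "real^'n" and L :: real and r :: nat
    and \<phi>P \<phi>D :: "real^'n \<Rightarrow> real"
    and \<alpha> :: "'n cidx \<Rightarrow> 'n cidx \<Rightarrow> real"
  assumes "L > 0" and "r \<ge> 1"
    and "is_density_on (hcube a L) \<phi>P"
    and "is_density_on (hcube a L) \<phi>D"
    and "lp_optimal a L r \<phi>P \<phi>D \<alpha>"
  shows "shadow_expected_dist a L r \<phi>P \<phi>D \<alpha>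
           \<le> wasserstein (hcube a L) \<phi>D \<phi>P
             + ennreal (2 * L * sqrt (real CARD('n)) / real r)"
proof -
  let ?c = "ennreal (2 * L * sqrt (real CARD('n)) / real r)"
  have ceq: "2 * L * sqrt (real CARD('n)) / real r = 2 * (L * sqrt (real CARD('n)) / real r)"
    by simp
  have feas: "lp_feasible a L r \<phi>P \<phi>D \<alpha>" using assms(5) unfolding lp_optimal_def by blast
  have A: "shadow_expected_dist a L r \<phi>P \<phi>D \<alpha> \<le> ennreal (lp_cost a L r \<alpha>)"
    by (rule partA[OF assms(1-4) feas])
  have "ennreal (lp_cost a L r \<alpha>) - ?c \<le> wasserstein (hcube a L) \<phi>D \<phi>P"
    unfolding wasserstein_def
  proof (rule INF_greatest)
    fix \<gamma> assume g: "\<gamma> \<in> couplings (hcube a L) \<phi>D \<phi>P"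
    have "ennreal (lp_cost a L r \<alpha>) \<le> (\<integral>\<^sup>+z. ennreal (norm (snd z - fst z)) \<partial>\<gamma>) + ?c"
      unfolding ceq by (rule partB[OF assms g])
    thus "ennreal (lp_cost a L r \<alpha>) - ?c \<le> (\<integral>\<^sup>+z. ennreal (norm (snd z - fst z)) \<partial>\<gamma>)"
      by (simp add: ennreal_minus_le_iff add.commute)
  qed
  hence "ennreal (lp_cost a L r \<alpha>) \<le> ?c + wasserstein (hcube a L) \<phi>D \<phi>P"
    by (simp add: ennreal_minus_le_iff)
  with A show ?thesis by (simp add: add.commute)
qed

end
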